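(* Let $D_j\subset\mathbb{R}^{L_j}$, $1\le j\le d$, be compact and convex, $D=\prod_jD_j$, and let $\xi$ be a random vector in $\prod_j\mathbb{R}^{L_j}$ with density $p$ bounded on $D^+(\varepsilon)=\prod_j\bigcup_{x_j\in D_j}\bar B_j(x_j,\varepsilon)$ for some $\varepsilon>0$. Let $\xi^1,\dots,\xi^n$ be i.i.d. copies of $\xi$ and $\tilde\xi^1,\dots,\tilde\xi^n$ random vectors with $\max_{1\le i\le n}\|\tilde\xi^i_j-\xi^i_j\|_j=O_p(a_{nj})$, $a_{nj}=o(1)$, for all $j$. Let $p_0^D=\Pr(\xi\in D)$, $\check p_0^D=n^{-1}\sum_iI(\xi^i\in D)$ and $\hat p_0^D=n^{-1}\sum_iI(\tilde\xi^i\in D)$. Then $|\hat p_0^D-\check p_0^D|=O_p\big(\sum_ja_{nj}+n^{-1/2}(\sum_ja_{nj})^{1/2}\big)$ and $|\hat p_0^D-p_0^D|=O_p\big(\sum_ja_{nj}+n^{-1/2}\big)$.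
   Context: $\|\cdot\|_j$ is the Euclidean norm on $\mathbb{R}^{L_j}$ and $\bar B_j(x,R)$ the closed ball; $\xi^i_j$ denotes the $j$-th block of $\xi^i$. *)

theory Defs
  imports "HOL-Probability.Probability"
begin

text \<open>The product space \<open>\<Prod>_j R^{L_j}\<close> is encoded as \<open>real^'n\<close> whose coordinate set
  is partitioned into blocks by \<open>blk :: 'n \<Rightarrow> 'd\<close>; block \<open>j\<close> consists of the coordinates
  \<open>i\<close> with \<open>blk i = j\<close>, so \<open>L_j = card {i. blk i = j}\<close>.  The block \<open>j\<close> component of a
  vector is identified (isometrically) with its projection onto the block subspace.\<close>

definition bproj :: "('n::finite \<Rightarrow> 'd) \<Rightarrow> 'd \<Rightarrow> real^'n \<Rightarrow> real^'n" where
  "bproj blk j x = (\<chi> i. if blk i = j then x $ i else 0)"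

definition block_subspace :: "('n::finite \<Rightarrow> 'd) \<Rightarrow> 'd \<Rightarrow> (real^'n) set" where
  "block_subspace blk j = {x. \<forall>i. blk i \<noteq> j \<longrightarrow> x $ i = 0}"

definition prod_blocks :: "('n::finite \<Rightarrow> 'd) \<Rightarrow> ('d \<Rightarrow> (real^'n) set) \<Rightarrow> (real^'n) set" where
  "prod_blocks blk D = {x. \<forall>j. bproj blk j x \<in> D j}"

definition enlarged :: "('n::finite \<Rightarrow> 'd) \<Rightarrow> ('d \<Rightarrow> (real^'n) set) \<Rightarrow> real \<Rightarrow> (real^'n) set" where
  "enlarged blk D \<epsilon> = {x. \<forall>j. \<exists>y\<in>D j. norm (bproj blk j x - y) \<le> \<epsilon>}"

definition Op :: "'a measure \<Rightarrow> (nat \<Rightarrow> 'a \<Rightarrow> real) \<Rightarrow> (nat \<Rightarrow> real) \<Rightarrow> bool" where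
  "Op M X r \<longleftrightarrow> (\<forall>\<eta>>0. \<exists>C N. \<forall>n\<ge>N. measure M {\<omega> \<in> space M. \<bar>X n \<omega>\<bar> > C * r n} < \<eta>)"

end

theory Submission
  imports Defs
begin

lemma (in prob_space) bin_cheb:
  fixes X :: "nat \<Rightarrow> 'a \<Rightarrow> 'b" and N :: "'b measure"
  assumes ind: "indep_vars (\<lambda>_. N) X UNIV" and A: "A \<in> sets N"
    and q: "\<And>i. prob {\<omega>\<in>space M. X i \<omega> \<in> A} = q" and n: "n > 0" and s: "s > 0"
  shows "prob {\<omega>\<in>space M. s \<le> \<bar>(\<Sum>i<n. indicator A (X i \<omega>)) / real n - q\<bar>} \<le> q / (real n * s^2)"
proof -
  have rv[measurable]: "X i \<in> measurable M N" for i using ind unfolding indep_vars_def by auto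
  define Z where "Z i \<omega> = (indicator A (X i \<omega>) :: real) - q" for i \<omega>
  have Zm[measurable]: "Z i \<in> borel_measurable M" for i unfolding Z_def using A by measurable
  have q0: "0 \<le> q" "q \<le> 1" using q[of 0] by auto
  have Zb: "\<bar>Z i \<omega>\<bar> \<le> 1" for i \<omega> using q0 by (auto simp: Z_def indicator_def)
  have intZ: "integrable M (Z i)" for i
    by (rule integrable_const_bound[where B=1]) (use Zb in auto)
  have intI: "expectation (\<lambda>\<omega>. indicator A (X i \<omega>) :: real) = q" for i
  proof -
    have ev: "{\<omega>\<in>space M. X i \<omega> \<in> A} \<in> events" using A by measurable
    have "expectation (\<lambda>\<omega>. indicator A (X i \<omega>) :: real) = expectation (indicator {\<omega>\<in>space M. X i \<omega> \<in> A})"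
      by (intro Bochner_Integration.integral_cong) (auto simp: indicator_def)
    also have "\<dots> = q" using q[of i] ev by simp
    finally show ?thesis .
  qed
  have intIi: "integrable M (\<lambda>\<omega>. indicator A (X i \<omega>) :: real)" for i
    by (rule integrable_const_bound[where B=1]) (use A in auto)
  have EZ: "expectation (Z i) = 0" for i
    unfolding Z_def using intI[of i] intIi[of i] by (simp add: prob_space)
  have EZ2: "expectation (\<lambda>\<omega>. Z i \<omega> * Z i \<omega>) \<le> q" for i
  proof -
    have "(\<lambda>\<omega>. Z i \<omega> * Z i \<omega>) = (\<lambda>\<omega>. (1 - 2*q) * indicator A (X i \<omega>) + q^2)"
      by (auto simp: Z_def indicator_def fun_eq_iff power2_eq_square algebra_simps)
    then have "expectation (\<lambda>\<omega>. Z i \<omega> * Z i \<omega>) = (1 - 2*q) * q + q^2"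
      using intI[of i] intIi[of i] by (simp add: prob_space)
    also have "\<dots> \<le> q" using q0 by (simp add: power2_eq_square algebra_simps)
    finally show ?thesis .
  qed
  have EZZ: "expectation (\<lambda>\<omega>. Z i \<omega> * Z k \<omega>) = 0" if "i \<noteq> k" for i k
  proof -
    have iv: "indep_vars (\<lambda>_. borel) Z UNIV"
      unfolding Z_def by (rule indep_vars_compose2[OF ind]) (use A in measurable)
    have iv2: "indep_vars (\<lambda>_. borel) Z {i,k}" by (rule indep_vars_subset[OF iv]) auto
    have "expectation (\<lambda>\<omega>. \<Prod>j\<in>{i,k}. Z j \<omega>) = (\<Prod>j\<in>{i,k}. expectation (Z j))"
      by (rule indep_vars_lebesgue_integral[OF _ iv2]) (auto intro: intZ)
    then show ?thesis using that EZ by simp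
  qed
  define f where "f \<omega> = (\<Sum>i<n. Z i \<omega>)" for \<omega>
  have fm[measurable]: "f \<in> borel_measurable M" unfolding f_def by measurable
  have fb: "\<bar>f \<omega>\<bar> \<le> real n" for \<omega>
  proof -
    have "\<bar>f \<omega>\<bar> \<le> (\<Sum>i<n. \<bar>Z i \<omega>\<bar>)" unfolding f_def by (rule sum_abs)
    also have "\<dots> \<le> (\<Sum>i<n. 1)" by (rule sum_mono) (rule Zb)
    finally show ?thesis by simp
  qed
  have intf2: "integrable M (\<lambda>x. f x ^ 2)"
    by (rule integrable_const_bound[where B="real n ^ 2"]) (use fb in \<open>auto intro!: AE_I2 simp: abs_le_square_iff[symmetric]\<close>)
  have Ef: "expectation f = 0"
    unfolding f_def by (subst Bochner_Integration.integral_sum) (auto simp: intZ EZ)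
  have f2: "f \<omega> ^ 2 = (\<Sum>i<n. \<Sum>k<n. Z i \<omega> * Z k \<omega>)" for \<omega>
    unfolding f_def power2_eq_square by (simp add: sum_product)
  have Ef2: "expectation (\<lambda>\<omega>. f \<omega> ^ 2) \<le> real n * q"
  proof -
    have intZZ: "integrable M (\<lambda>\<omega>. Z i \<omega> * Z k \<omega>)" for i k
      by (rule integrable_const_bound[where B=1]) (use Zb in \<open>auto simp: abs_mult intro!: AE_I2 mult_le_one\<close>)
    have "expectation (\<lambda>\<omega>. f \<omega> ^ 2) = (\<Sum>i<n. \<Sum>k<n. expectation (\<lambda>\<omega>. Z i \<omega> * Z k \<omega>))"
      unfolding f2 by (simp add: intZZ Bochner_Integration.integral_sum)
    also have "\<dots> = (\<Sum>i<n. expectation (\<lambda>\<omega>. Z i \<omega> * Z i \<omega>))"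
    proof (rule sum.cong[OF refl])
      fix i assume i: "i \<in> {..<n}"
      have "(\<Sum>k<n. expectation (\<lambda>\<omega>. Z i \<omega> * Z k \<omega>)) = (\<Sum>k\<in>{i}. expectation (\<lambda>\<omega>. Z i \<omega> * Z k \<omega>))"
        by (rule sum.mono_neutral_right) (use i EZZ in auto)
      then show "(\<Sum>k<n. expectation (\<lambda>\<omega>. Z i \<omega> * Z k \<omega>)) = expectation (\<lambda>\<omega>. Z i \<omega> * Z i \<omega>)" by simp
    qed
    also have "\<dots> \<le> (\<Sum>i<n. q)" by (rule sum_mono) (rule EZ2)
    finally show ?thesis by simp
  qed
  have ns: "real n * s > 0" using n s by simp
  have "{\<omega>\<in>space M. s \<le> \<bar>(\<Sum>i<n. indicator A (X i \<omega>)) / real n - q\<bar>} = {\<omega>\<in>space M. real n * s \<le> \<bar>f \<omega> - expectation f\<bar>}"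
  proof -
    have "(\<Sum>i<n. indicator A (X i \<omega>)) / real n - q = f \<omega> / real n" for \<omega>
      using n by (simp add: f_def Z_def sum_subtractf field_simps)
    then show ?thesis using n by (auto simp: Ef abs_divide field_simps)
  qed
  also have "prob \<dots> \<le> variance f / (real n * s)^2"
    by (rule Chebyshev_inequality) (use intf2 ns in auto)
  also have "variance f = expectation (\<lambda>\<omega>. f \<omega> ^ 2)" by (simp add: Ef)
  also have "expectation (\<lambda>\<omega>. f \<omega> ^ 2) / (real n * s)^2 \<le> real n * q / (real n * s)^2"
    by (rule divide_right_mono[OF Ef2]) simp
  also have "real n * q / (real n * s)^2 = q / (real n * s^2)" using n by (simp add: power2_eq_square)
  finally show ?thesis .
qed

lemma pow_diff_le:
  fixes a b :: real assumes "0 \<le> b" "b \<le> a"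
  shows "a^(Suc n) - b^(Suc n) \<le> real (Suc n) * (a - b) * a^n"
proof (induction n)
  case 0 then show ?case by simp
next
  case (Suc n)
  have "a^(Suc (Suc n)) - b^(Suc (Suc n)) = a * (a^(Suc n) - b^(Suc n)) + (a - b) * b^(Suc n)"
    by (simp add: algebra_simps)
  also have "\<dots> \<le> a * (real (Suc n) * (a - b) * a^n) + (a - b) * a^(Suc n)"
    using assms Suc by (intro add_mono mult_left_mono power_mono) auto
  also have "\<dots> = real (Suc (Suc n)) * (a - b) * a^(Suc n)" by (simp add: algebra_simps)
  finally show ?case .
qed

lemma shell_full:
  fixes E :: "'a::euclidean_space set"
  assumes cvx: "convex E" and cl: "closed E" and ball: "cball c r \<subseteq> E" and r: "r > 0"
  shows "\<exists>K. \<forall>\<delta>. 0 \<le> \<delta> \<and> \<delta> \<le> r \<longrightarrow>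
     emeasure lebesgue (cball 0 R \<inter> {x. (\<exists>z\<in>E. dist x z \<le> \<delta>) \<and> \<not> cball x \<delta> \<subseteq> E}) \<le> ennreal (K * \<delta>)"
proof -
  define R' where "R' = R + norm c"
  define A where "A = (\<lambda>x. x - c) ` E \<inter> cball 0 R'"
  have cE: "c \<in> E" using ball r by auto
  have "closed ((\<lambda>x. x - c) ` E)"
    using closed_translation[OF cl, of "-c"] by (simp cong: image_cong_simp)
  then have Acomp: "compact A" unfolding A_def by (intro closed_Int_compact) auto
  define m where "m = measure lebesgue A"
  define N where "N = DIM('a)"
  have N1: "N \<ge> 1" unfolding N_def by (simp add: DIM_positive Suc_le_eq)
  define K where "K = 2 * m * real N * 2^N / r"
  have m0: "m \<ge> 0" unfolding m_def by simp
  show ?thesis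
  proof (intro exI[of _ K] allI impI)
    fix \<delta> :: real assume d: "0 \<le> \<delta> \<and> \<delta> \<le> r"
    define t where "t = \<delta> / r"
    have t: "0 \<le> t" "t \<le> 1" using d r by (auto simp: t_def)
    define P where "P = (\<lambda>x. (1 + t) *\<^sub>R x + c) ` A"
    define Q where "Q = (\<lambda>x. (1 - t) *\<^sub>R x + c) ` A"
    have Pc: "compact P" unfolding P_def by (intro compact_continuous_image Acomp continuous_intros)
    have Qc: "compact Q" unfolding Q_def by (intro compact_continuous_image Acomp continuous_intros)
    have sub: "cball 0 R \<inter> {x. (\<exists>z\<in>E. dist x z \<le> \<delta>) \<and> \<not> cball x \<delta> \<subseteq> E} \<subseteq> P - Q"
    proof
      fix x assume x: "x \<in> cball 0 R \<inter> {x. (\<exists>z\<in>E. dist x z \<le> \<delta>) \<and> \<not> cball x \<delta> \<subseteq> E}"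
      then obtain z where z: "z \<in> E" "dist x z \<le> \<delta>" and nb: "\<not> cball x \<delta> \<subseteq> E" and xR: "norm x \<le> R" by auto
      define y where "y = inverse (1 + t) *\<^sub>R (x - c)"
      have "y + c \<in> E"
      proof (cases "t = 0")
        case True
        then have "\<delta> = 0" using r by (simp add: t_def)
        then show ?thesis using z True by (simp add: y_def)
      next
        case False
        then have tp: "t > 0" using t by simp
        define w where "w = x - z"
        have "norm (inverse t *\<^sub>R w) = (r / \<delta>) * norm w" using tp r d by (auto simp: t_def zero_less_divide_iff)
        also have "\<dots> \<le> (r / \<delta>) * \<delta>" using z tp r d by (intro mult_left_mono) (auto simp: w_def dist_norm t_def)
        also have "\<dots> = r" using tp r d by (auto simp: t_def zero_less_divide_iff)
        finally have "c + inverse t *\<^sub>R w \<in> cball c r" by (simp add: dist_norm)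
        then have cw: "c + inverse t *\<^sub>R w \<in> E" using ball by auto
        have "y + c = inverse (1 + t) *\<^sub>R z + (t / (1 + t)) *\<^sub>R (c + inverse t *\<^sub>R w)"
          using tp by (simp add: y_def w_def field_simps scaleR_add_right scaleR_diff_right
              scaleR_add_left[symmetric] algebra_simps)
        also have "\<dots> \<in> E"
          by (rule convexD[OF cvx z(1) cw]) (use tp in \<open>auto simp: field_simps\<close>)
        finally show ?thesis .
      qed
      moreover have "norm y \<le> R'"
      proof -
        have "norm y = inverse (1 + t) * norm (x - c)" using t by (simp add: y_def)
        also have "\<dots> \<le> 1 * norm (x - c)" using t by (intro mult_right_mono) (auto simp: inverse_le_1_iff)
        also have "\<dots> \<le> R'" unfolding R'_def using xR norm_triangle_ineq4[of x c] by simp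
        finally show ?thesis .
      qed
      ultimately have "y \<in> A" unfolding A_def by (auto intro!: image_eqI[of _ _ "y + c"])
      moreover have "x = (1 + t) *\<^sub>R y + c" using t by (simp add: y_def)
      ultimately have "x \<in> P" unfolding P_def by auto
      moreover have "x \<notin> Q"
      proof
        assume "x \<in> Q"
        then obtain y where y: "y \<in> A" "x = (1 - t) *\<^sub>R y + c" unfolding Q_def by auto
        have yE: "y + c \<in> E" using y(1) unfolding A_def by auto
        have "cball x \<delta> \<subseteq> E"
        proof
          fix v assume v: "v \<in> cball x \<delta>"
          show "v \<in> E"
          proof (cases "t = 0")
            case True
            then have "\<delta> = 0" using r by (simp add: t_def)
            then show ?thesis using v True y yE by (simp add: algebra_simps)
          next
            case False
            then have tp: "t > 0" using t by simp
            have "norm (inverse t *\<^sub>R (v - x)) = (r / \<delta>) * norm (v - x)" using tp r d by (auto simp: t_def zero_less_divide_iff)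
            also have "\<dots> \<le> (r / \<delta>) * \<delta>" using v tp r d by (intro mult_left_mono) (auto simp: dist_norm norm_minus_commute t_def)
            also have "\<dots> = r" using tp r d by (auto simp: t_def zero_less_divide_iff)
            finally have "c + inverse t *\<^sub>R (v - x) \<in> cball c r" by (simp add: dist_norm)
            then have cw: "c + inverse t *\<^sub>R (v - x) \<in> E" using ball by auto
            have "v = (1 - t) *\<^sub>R (y + c) + t *\<^sub>R (c + inverse t *\<^sub>R (v - x))"
              using tp y(2) by (simp add: algebra_simps)
            also have "\<dots> \<in> E"
              by (rule convexD[OF cvx yE cw]) (use t in auto)
            finally show ?thesis .
          qed
        qed
        then show False using nb by simp
      qed
      ultimately show "x \<in> P - Q" by simp
    qed
    have QP: "Q \<subseteq> P"
    proof
      fix x assume "x \<in> Q"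
      then obtain y where y: "y \<in> A" "x = (1 - t) *\<^sub>R y + c" unfolding Q_def by auto
      have yE: "y + c \<in> E" and yR: "norm y \<le> R'" using y(1) unfolding A_def by auto
      define s where "s = (1 - t) / (1 + t)"
      have s: "0 \<le> s" "s \<le> 1" using t by (auto simp: s_def field_simps)
      have "s *\<^sub>R y + c = s *\<^sub>R (y + c) + (1 - s) *\<^sub>R c" by (simp add: algebra_simps)
      also have "\<dots> \<in> E" by (rule convexD[OF cvx yE cE]) (use s in auto)
      finally have "s *\<^sub>R y + c \<in> E" .
      moreover have "norm (s *\<^sub>R y) \<le> R'"
        using s yR by (simp add: mult_le_one order_trans[OF mult_left_le_one_le])
      ultimately have "s *\<^sub>R y \<in> A" unfolding A_def by (auto intro!: image_eqI[of _ _ "s *\<^sub>R y + c"])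
      moreover have "x = (1 + t) *\<^sub>R (s *\<^sub>R y) + c" using t y(2) by (simp add: s_def)
      ultimately show "x \<in> P" unfolding P_def by (metis image_eqI)
    qed
    have mP: "measure lebesgue P = (1 + t)^N * m"
      unfolding P_def m_def N_def using measure_lebesgue_affine[of "1 + t" c A] t by simp
    have mQ: "measure lebesgue Q = (1 - t)^N * m"
      unfolding Q_def m_def N_def using measure_lebesgue_affine[of "1 - t" c A] t by simp
    have Pl: "P \<in> lmeasurable" and Ql: "Q \<in> lmeasurable" using Pc Qc by (auto intro: lmeasurable_compact)
    have "emeasure lebesgue (cball 0 R \<inter> {x. (\<exists>z\<in>E. dist x z \<le> \<delta>) \<and> \<not> cball x \<delta> \<subseteq> E})
        \<le> emeasure lebesgue (P - Q)"
      by (rule emeasure_mono[OF sub]) (use Pl Ql in auto)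
    also have "\<dots> = ennreal (measure lebesgue (P - Q))"
      using Pl Ql by (intro emeasure_eq_measure2) auto
    also have "measure lebesgue (P - Q) = ((1 + t)^N - (1 - t)^N) * m"
      using measure_Diff[of lebesgue P Q] Pl Ql QP mP mQ by (auto simp: fmeasurable_def algebra_simps)
    also have "\<dots> \<le> K * \<delta>"
    proof -
      obtain k where k: "N = Suc k" using N1 by (cases N) auto
      have "(1 + t)^N - (1 - t)^N \<le> real N * (2 * t) * (1 + t)^k"
        using pow_diff_le[of "1 - t" "1 + t" k] t k by simp
      also have "\<dots> \<le> real N * (2 * t) * 2^N"
      proof -
        have "(1 + t)^k \<le> 2^k" using t by (intro power_mono) auto
        also have "(2::real)^k \<le> 2^N" using k by (intro power_increasing) auto
        finally show ?thesis using t by (intro mult_left_mono) auto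
      qed
      finally have "((1 + t)^N - (1 - t)^N) * m \<le> real N * (2 * t) * 2^N * m"
        using m0 by (intro mult_right_mono) auto
      also have "\<dots> = K * \<delta>" using r by (simp add: K_def t_def field_simps)
      finally show ?thesis .
    qed
    finally show "emeasure lebesgue (cball 0 R \<inter> {x. (\<exists>z\<in>E. dist x z \<le> \<delta>) \<and> \<not> cball x \<delta> \<subseteq> E}) \<le> ennreal (K * \<delta>)"
      by (simp add: ennreal_leI)
  qed
qed


lemma closed_plus_set:
  fixes E :: "'a::euclidean_space set"
  assumes "closed E" "0 \<le> \<delta>"
  shows "closed {x. \<exists>z\<in>E. dist x z \<le> \<delta>}"
proof -
  have "{x. \<exists>z\<in>E. dist x z \<le> \<delta>} = (\<Union>x\<in>E. \<Union>y\<in>cball 0 \<delta>. {x + y})"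
  proof (intro set_eqI iffI)
    fix x assume "x \<in> {x. \<exists>z\<in>E. dist x z \<le> \<delta>}"
    then obtain z where "z \<in> E" "dist x z \<le> \<delta>" by auto
    moreover have "x = z + (x - z)" by simp
    moreover have "x - z \<in> cball 0 \<delta>" using \<open>dist x z \<le> \<delta>\<close> by (simp add: dist_norm norm_minus_commute)
    ultimately show "x \<in> (\<Union>x\<in>E. \<Union>y\<in>cball 0 \<delta>. {x + y})" by blast
  next
    fix x assume "x \<in> (\<Union>x\<in>E. \<Union>y\<in>cball 0 \<delta>. {x + y})"
    then obtain z w where "z \<in> E" "w \<in> cball 0 \<delta>" "x = z + w" by auto
    then show "x \<in> {x. \<exists>z\<in>E. dist x z \<le> \<delta>}" by (intro CollectI bexI[of _ z]) (auto simp: dist_norm)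
  qed
  then show ?thesis using closed_compact_sums[OF assms(1) compact_cball[of 0 \<delta>]] by simp
qed

lemma closed_int_set:
  fixes E :: "'a::euclidean_space set"
  assumes "closed E"
  shows "closed {x. cball x \<delta> \<subseteq> E}"
proof -
  have "{x. cball x \<delta> \<subseteq> E} = (\<Inter>w\<in>cball 0 \<delta>. (\<lambda>x. x + w) -` E)"
  proof (intro set_eqI iffI)
    fix x assume x: "x \<in> {x. cball x \<delta> \<subseteq> E}"
    show "x \<in> (\<Inter>w\<in>cball 0 \<delta>. (\<lambda>x. x + w) -` E)"
    proof
      fix w :: 'a assume "w \<in> cball 0 \<delta>"
      then have "x + w \<in> E" using x by (auto simp: dist_norm)
      then show "x \<in> (\<lambda>x. x + w) -` E" by simp
    qed
  next
    fix x assume x: "x \<in> (\<Inter>w\<in>cball 0 \<delta>. (\<lambda>x. x + w) -` E)"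
    show "x \<in> {x. cball x \<delta> \<subseteq> E}"
    proof (clarify)
      fix v assume "v \<in> cball x \<delta>"
      then have "v - x \<in> cball 0 \<delta>" by (auto simp: dist_norm norm_minus_commute)
      then have "x \<in> (\<lambda>y. y + (v - x)) -` E" using x by blast
      then show "v \<in> E" by simp
    qed
  qed
  moreover have "closed ((\<lambda>x. x + w) -` E)" for w
    by (rule continuous_closed_vimage[OF assms]) (intro continuous_intros)
  ultimately show ?thesis by (auto intro!: closed_INT)
qed

lemma shell_set_borel:
  fixes E :: "'a::euclidean_space set"
  assumes "closed E" "0 \<le> \<delta>"
  shows "cball 0 R \<inter> {x. (\<exists>z\<in>E. dist x z \<le> \<delta>) \<and> \<not> cball x \<delta> \<subseteq> E} \<in> sets lebesgue"
proof -
  have "cball 0 R \<inter> {x. (\<exists>z\<in>E. dist x z \<le> \<delta>) \<and> \<not> cball x \<delta> \<subseteq> E}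
     = cball 0 R \<inter> ({x. \<exists>z\<in>E. dist x z \<le> \<delta>} - {x. cball x \<delta> \<subseteq> E})" by auto
  also have "\<dots> \<in> sets borel"
    using closed_plus_set[OF assms] closed_int_set[OF assms(1)]
    by (intro sets.Int sets.Diff borel_closed) auto
  finally show ?thesis by (rule sets_completionI_sets[where M=lborel, simplified])
qed

lemma shell_gen:
  fixes E :: "'a::euclidean_space set"
  assumes cvx: "convex E" and cl: "closed E"
  shows "\<exists>\<delta>0>0. \<exists>K. \<forall>\<delta>. 0 \<le> \<delta> \<and> \<delta> \<le> \<delta>0 \<longrightarrow>
     emeasure lebesgue (cball 0 R \<inter> {x. (\<exists>z\<in>E. dist x z \<le> \<delta>) \<and> \<not> cball x \<delta> \<subseteq> E}) \<le> ennreal (K * \<delta>)"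
proof (cases "interior E = {}")
  case False
  then obtain c where "c \<in> interior E" by auto
  then obtain e where e: "e > 0" "ball c e \<subseteq> E" by (meson mem_interior)
  have "cball c (e/2) \<subseteq> ball c e"
  proof
    fix x assume "x \<in> cball c (e/2)"
    then have "dist c x \<le> e/2" by simp
    then show "x \<in> ball c e" using e(1) by simp
  qed
  then have "cball c (e/2) \<subseteq> E" using e(2) by (rule order_trans)
  from shell_full[OF cvx cl this, of R] e show ?thesis by (intro exI[of _ "e/2"]) auto
next
  case True
  obtain a b where ab: "a \<noteq> 0" "E \<subseteq> {x. a \<bullet> x = b}"
    using empty_interior_subset_hyperplane[OF cvx True] by blast
  define H where "H = {x. a \<bullet> x \<le> b}"
  have Hc: "convex H" unfolding H_def by (rule convex_halfspace_le)
  have Hcl: "closed H" unfolding H_def by (rule closed_halfspace_le)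
  define c where "c = ((b - norm a) / (a \<bullet> a)) *\<^sub>R a"
  have ac: "a \<bullet> c = b - norm a" using ab by (simp add: c_def)
  have "cball c 1 \<subseteq> H"
  proof
    fix x assume "x \<in> cball c 1"
    then have "norm (x - c) \<le> 1" by (simp add: dist_norm norm_minus_commute)
    have "a \<bullet> x = a \<bullet> c + a \<bullet> (x - c)" by (simp add: inner_diff_right)
    also have "a \<bullet> (x - c) \<le> norm a * norm (x - c)" by (rule norm_cauchy_schwarz) 
    also have "\<dots> \<le> norm a" using \<open>norm (x - c) \<le> 1\<close> by (simp add: mult_left_le)
    finally show "x \<in> H" using ac by (simp add: H_def)
  qed
  from shell_full[OF Hc Hcl this, of R] obtain K where
    K: "\<And>\<delta>. 0 \<le> \<delta> \<and> \<delta> \<le> 1 \<Longrightarrow>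
     emeasure lebesgue (cball 0 R \<inter> {x. (\<exists>z\<in>H. dist x z \<le> \<delta>) \<and> \<not> cball x \<delta> \<subseteq> H}) \<le> ennreal (K * \<delta>)"
    by auto
  show ?thesis
  proof (rule exI[of _ "1/2"], intro conjI exI[of _ "2*K"] allI impI)
    fix \<delta> :: real assume d: "0 \<le> \<delta> \<and> \<delta> \<le> 1/2"
    show "emeasure lebesgue (cball 0 R \<inter> {x. (\<exists>z\<in>E. dist x z \<le> \<delta>) \<and> \<not> cball x \<delta> \<subseteq> E}) \<le> ennreal (2 * K * \<delta>)"
    proof (cases "\<delta> = 0")
      case True
      then have "{x. (\<exists>z\<in>E. dist x z \<le> \<delta>) \<and> \<not> cball x \<delta> \<subseteq> E} = {}" by auto
      then show ?thesis unfolding \<open>{x. (\<exists>z\<in>E. dist x z \<le> \<delta>) \<and> \<not> cball x \<delta> \<subseteq> E} = {}\<close> by simp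
    next
      case False
      then have dp: "\<delta> > 0" using d by simp
      have "cball 0 R \<inter> {x. (\<exists>z\<in>E. dist x z \<le> \<delta>) \<and> \<not> cball x \<delta> \<subseteq> E}
          \<subseteq> cball 0 R \<inter> {x. (\<exists>z\<in>H. dist x z \<le> 2*\<delta>) \<and> \<not> cball x (2*\<delta>) \<subseteq> H}"
      proof (intro subsetI)
        fix x assume "x \<in> cball 0 R \<inter> {x. (\<exists>z\<in>E. dist x z \<le> \<delta>) \<and> \<not> cball x \<delta> \<subseteq> E}"
        then obtain z where x: "x \<in> cball 0 R" and z: "z \<in> E" "dist x z \<le> \<delta>" by auto
        have az: "a \<bullet> z = b" using z ab by auto
        have "z \<in> H" using az by (simp add: H_def)
        moreover have "dist x z \<le> 2*\<delta>" using z dp by simp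
        moreover have "\<not> cball x (2*\<delta>) \<subseteq> H"
        proof
          assume sub: "cball x (2*\<delta>) \<subseteq> H"
          define v where "v = x + (2*\<delta>/norm a) *\<^sub>R a"
          have "v \<in> cball x (2*\<delta>)" using ab dp by (simp add: v_def dist_norm)
          then have "a \<bullet> v \<le> b" using sub by (auto simp: H_def)
          moreover have "a \<bullet> v = a \<bullet> x + 2*(norm a*\<delta>)"
            using ab by (simp add: v_def inner_add_right power2_norm_eq_inner[symmetric] power2_eq_square)
          moreover have "a \<bullet> (z - x) \<le> norm a * \<delta>"
          proof -
            have "a \<bullet> (z - x) \<le> norm a * norm (z - x)" by (rule norm_cauchy_schwarz)
            also have "\<dots> \<le> norm a * \<delta>" using z by (intro mult_left_mono) (auto simp: dist_norm norm_minus_commute)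
            finally show ?thesis .
          qed
          moreover have "norm a * \<delta> > 0" using ab dp by simp
          ultimately show False using az by (simp add: inner_diff_right)
        qed
        ultimately show "x \<in> cball 0 R \<inter> {x. (\<exists>z\<in>H. dist x z \<le> 2*\<delta>) \<and> \<not> cball x (2*\<delta>) \<subseteq> H}"
          using x by auto
      qed
      then have "emeasure lebesgue (cball 0 R \<inter> {x. (\<exists>z\<in>E. dist x z \<le> \<delta>) \<and> \<not> cball x \<delta> \<subseteq> E})
          \<le> emeasure lebesgue (cball 0 R \<inter> {x. (\<exists>z\<in>H. dist x z \<le> 2*\<delta>) \<and> \<not> cball x (2*\<delta>) \<subseteq> H})"
      proof (rule emeasure_mono)
        show "cball 0 R \<inter> {x. (\<exists>z\<in>H. dist x z \<le> 2*\<delta>) \<and> \<not> cball x (2*\<delta>) \<subseteq> H} \<in> sets lebesgue"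
          using shell_set_borel[OF Hcl, of "2*\<delta>" R] dp by simp
      qed
      also have "\<dots> \<le> ennreal (K * (2*\<delta>))" using K[of "2*\<delta>"] d dp by auto
      finally show ?thesis by (simp add: mult_ac)
    qed
  qed simp
qed

lemma bproj_nth: "bproj blk j x $ i = (if blk i = j then x $ i else 0)"
  by (simp add: bproj_def)

lemma bproj_add: "bproj blk j (x + y) = bproj blk j x + bproj blk j y"
  by (simp add: bproj_def vec_eq_iff)
lemma bproj_diff: "bproj blk j (x - y) = bproj blk j x - bproj blk j y"
  by (simp add: bproj_def vec_eq_iff)
lemma bproj_idem: "bproj blk j (bproj blk j x) = bproj blk j x"
  by (simp add: bproj_def vec_eq_iff)
lemma linear_bproj: "linear (bproj blk j)"
  by (rule linearI) (auto simp: bproj_def vec_eq_iff)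
lemma continuous_bproj: "continuous_on UNIV (bproj blk j)"
  by (rule linear_continuous_on) (simp add: linear_conv_bounded_linear[symmetric] linear_bproj)
lemma closed_bproj_vimage: "closed S \<Longrightarrow> closed (bproj blk j -` S)"
proof (rule continuous_closed_vimage)
  have "continuous_on UNIV (bproj blk j)" by (rule continuous_bproj)
  then show "isCont (bproj blk j) x" for x by (simp add: continuous_on_eq_continuous_at)
qed
lemma bproj_measurable[measurable]: "bproj blk j \<in> borel_measurable borel"
  by (intro borel_measurable_continuous_onI continuous_bproj)

lemma sum_bproj: "(\<Sum>j\<in>(UNIV::'d::finite set). bproj blk j x) = x"
proof -
  have "(\<Sum>j\<in>(UNIV::'d set). bproj blk j x) $ i = x $ i" for i
  proof -
    have "(\<Sum>j\<in>(UNIV::'d set). bproj blk j x) $ i = (\<Sum>j\<in>UNIV. if blk i = j then x $ i else 0)"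
      by (simp add: bproj_nth)
    also have "\<dots> = x $ i" by (simp add: sum.delta)
    finally show ?thesis .
  qed
  then show ?thesis by (simp add: vec_eq_iff)
qed

definition Ecyl :: "('n::finite \<Rightarrow> 'd) \<Rightarrow> ('d \<Rightarrow> (real^'n) set) \<Rightarrow> 'd \<Rightarrow> (real^'n) set" where
  "Ecyl blk D j = {x. bproj blk j x \<in> D j}"

definition Tset :: "('n::finite \<Rightarrow> 'd) \<Rightarrow> ('d \<Rightarrow> (real^'n) set) \<Rightarrow> real \<Rightarrow> real \<Rightarrow> (real^'n) set" where
  "Tset blk D \<epsilon> \<delta> = enlarged blk D \<epsilon> \<inter>
     (\<Union>j. {x. (\<exists>z\<in>Ecyl blk D j. dist x z \<le> \<delta>) \<and> \<not> cball x \<delta> \<subseteq> Ecyl blk D j})"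

lemma Ecyl_closed: "closed (D j) \<Longrightarrow> closed (Ecyl blk D j)"
  unfolding Ecyl_def using closed_bproj_vimage[of "D j" blk j] by (simp add: vimage_def)

lemma Ecyl_convex: "convex (D j) \<Longrightarrow> convex (Ecyl blk D j)"
  unfolding Ecyl_def using convex_linear_vimage[OF linear_bproj] by (auto simp: vimage_def)

lemma key_pointwise:
  fixes x y :: "real^'n::finite" and blk :: "'n \<Rightarrow> 'd"
  assumes d: "0 \<le> \<delta>" "\<delta> \<le> \<epsilon>" and close: "\<And>j. norm (bproj blk j y - bproj blk j x) \<le> \<delta>"
  shows "\<bar>indicator (prod_blocks blk D) y - indicator (prod_blocks blk D) x\<bar> \<le> (indicator (Tset blk D \<epsilon> \<delta>) x :: real)"
proof (cases "(x \<in> prod_blocks blk D) = (y \<in> prod_blocks blk D)")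
  case True then show ?thesis by (auto simp: indicator_def)
next
  case False
  define y' where "y' j = x + bproj blk j (y - x)" for j
  have by': "bproj blk j (y' j) = bproj blk j y" for j
    by (simp add: y'_def bproj_add bproj_diff bproj_idem)
  have dy': "dist x (y' j) \<le> \<delta>" for j
    using close[of j] by (simp add: y'_def dist_norm bproj_diff norm_minus_commute)
  have "x \<in> Tset blk D \<epsilon> \<delta>"
  proof (cases "x \<in> prod_blocks blk D")
    case True
    with False have yn: "y \<notin> prod_blocks blk D" by simp
    then obtain j where j: "bproj blk j y \<notin> D j" by (auto simp: prod_blocks_def)
    have "y' j \<notin> Ecyl blk D j" using j by (simp add: Ecyl_def by')
    then have "\<not> cball x \<delta> \<subseteq> Ecyl blk D j" using dy'[of j] by auto
    moreover have "x \<in> Ecyl blk D j" using True by (simp add: prod_blocks_def Ecyl_def)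
    moreover have "x \<in> enlarged blk D \<epsilon>"
      using True d unfolding prod_blocks_def enlarged_def by (auto intro!: bexI[of _ "bproj blk _ x"])
    ultimately show ?thesis unfolding Tset_def using d by (auto intro!: bexI[of _ x])
  next
    case xn: False
    with False have yy: "y \<in> prod_blocks blk D" by simp
    then obtain j where j: "bproj blk j x \<notin> D j" using xn by (auto simp: prod_blocks_def)
    have "x \<notin> Ecyl blk D j" using j by (simp add: Ecyl_def)
    then have "\<not> cball x \<delta> \<subseteq> Ecyl blk D j" using d by (metis centre_in_cball subsetD)
    moreover have "y' j \<in> Ecyl blk D j" using yy by (simp add: Ecyl_def by' prod_blocks_def)
    moreover have "x \<in> enlarged blk D \<epsilon>"
      unfolding enlarged_def
    proof (clarify)
      fix k
      have "norm (bproj blk k x - bproj blk k y) \<le> \<epsilon>" using close[of k] d by (simp add: norm_minus_commute)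
      moreover have "bproj blk k y \<in> D k" using yy by (simp add: prod_blocks_def)
      ultimately show "\<exists>z\<in>D k. norm (bproj blk k x - z) \<le> \<epsilon>" by blast
    qed
    ultimately show ?thesis unfolding Tset_def using dy'[of j] by blast
  qed
  then show ?thesis by (auto simp: indicator_def)
qed

lemma enlarged_closed:
  fixes blk :: "'n::finite \<Rightarrow> 'd::finite"
  assumes "\<And>j. closed (D j)" "0 \<le> \<epsilon>"
  shows "closed (enlarged blk D \<epsilon>)"
proof -
  have "enlarged blk D \<epsilon> = (\<Inter>j. bproj blk j -` {x. \<exists>z\<in>D j. dist x z \<le> \<epsilon>})"
    by (auto simp: enlarged_def dist_norm)
  moreover have "closed (bproj blk j -` {x. \<exists>z\<in>D j. dist x z \<le> \<epsilon>})" for j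
    by (rule closed_bproj_vimage[OF closed_plus_set[OF assms(1) assms(2)]])
  ultimately show ?thesis by auto
qed

lemma prod_blocks_closed:
  fixes blk :: "'n::finite \<Rightarrow> 'd::finite"
  assumes "\<And>j. closed (D j)"
  shows "closed (prod_blocks blk D)"
proof -
  have "prod_blocks blk D = (\<Inter>j. Ecyl blk D j)" by (auto simp: prod_blocks_def Ecyl_def)
  moreover have "closed (Ecyl blk D j)" for j by (rule Ecyl_closed) (rule assms)
  ultimately show ?thesis by auto
qed

lemma Tset_borel:
  fixes blk :: "'n::finite \<Rightarrow> 'd::finite"
  assumes "\<And>j. closed (D j)" "0 \<le> \<epsilon>" "0 \<le> \<delta>"
  shows "Tset blk D \<epsilon> \<delta> \<in> sets borel"
proof -
  have "Tset blk D \<epsilon> \<delta> = enlarged blk D \<epsilon> \<inter>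
     (\<Union>j. {x. \<exists>z\<in>Ecyl blk D j. dist x z \<le> \<delta>} - {x. cball x \<delta> \<subseteq> Ecyl blk D j})"
    unfolding Tset_def by auto
  moreover have "closed (Ecyl blk D j)" for j by (rule Ecyl_closed) (rule assms(1))
  have c1: "closed (enlarged blk D \<epsilon>)" by (rule enlarged_closed) (use assms in auto)
  have c2: "{x. \<exists>z\<in>Ecyl blk D j. dist x z \<le> \<delta>} - {x. cball x \<delta> \<subseteq> Ecyl blk D j} \<in> sets borel" for j
    using closed_plus_set[OF \<open>closed (Ecyl blk D j)\<close> assms(3)] closed_int_set[OF \<open>closed (Ecyl blk D j)\<close>]
    by (intro sets.Diff borel_closed) auto
  have "(\<Union>j. {x. \<exists>z\<in>Ecyl blk D j. dist x z \<le> \<delta>} - {x. cball x \<delta> \<subseteq> Ecyl blk D j}) \<in> sets borel"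
    using c2 by (intro sets.countable_UN') auto
  then have "Tset blk D \<epsilon> \<delta> \<in> sets borel"
    unfolding \<open>Tset blk D \<epsilon> \<delta> = _\<close> using c1 by (intro sets.Int borel_closed[OF c1]) auto
  then show ?thesis .
qed

lemma enlarged_bounded:
  fixes blk :: "'n::finite \<Rightarrow> 'd::finite"
  assumes "\<And>j. compact (D j)"
  shows "\<exists>R. enlarged blk D \<epsilon> \<subseteq> cball 0 R"
proof -
  have "\<exists>R. \<forall>y\<in>D j. norm y \<le> R" for j
    using compact_imp_bounded[OF assms] by (auto simp: bounded_iff)
  then obtain Rf where Rf: "\<And>j y. y \<in> D j \<Longrightarrow> norm y \<le> Rf j" by metis
  show ?thesis
  proof (intro exI[of _ "\<Sum>j\<in>UNIV. Rf j + \<epsilon>"] subsetI)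
    fix x assume x: "x \<in> enlarged blk D \<epsilon>"
    have "norm (bproj blk j x) \<le> Rf j + \<epsilon>" for j
    proof -
      obtain y where "y \<in> D j" "norm (bproj blk j x - y) \<le> \<epsilon>" using x by (auto simp: enlarged_def)
      then show ?thesis using Rf[of y j] norm_triangle_ineq2[of "bproj blk j x" y] by simp
    qed
    then have "norm x \<le> (\<Sum>j\<in>UNIV. Rf j + \<epsilon>)"
      using norm_sum[of "\<lambda>j. bproj blk j x" UNIV] sum_mono[of UNIV "\<lambda>j. norm (bproj blk j x)" "\<lambda>j. Rf j + \<epsilon>"]
      by (simp add: sum_bproj)
    then show "x \<in> cball 0 (\<Sum>j\<in>UNIV. Rf j + \<epsilon>)" by simp
  qed
qed

lemma Tset_measure:
  fixes blk :: "'n::finite \<Rightarrow> 'd::finite"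
  assumes comp: "\<And>j. compact (D j)" and cvx: "\<And>j. convex (D j)" and e: "0 \<le> \<epsilon>"
  shows "\<exists>\<delta>0>0. \<exists>K\<ge>0. \<forall>\<delta>. 0 \<le> \<delta> \<and> \<delta> \<le> \<delta>0 \<longrightarrow> emeasure lebesgue (Tset blk D \<epsilon> \<delta>) \<le> ennreal (K * \<delta>)"
proof -
  obtain R where R: "enlarged blk D \<epsilon> \<subseteq> cball 0 R" using enlarged_bounded[of D blk \<epsilon>] comp by blast
  have cl: "closed (D j)" for j using comp[of j] by (rule compact_imp_closed)
  have Ecl: "closed (Ecyl blk D j)" for j by (rule Ecyl_closed) (rule cl)
  have Ecv: "convex (Ecyl blk D j)" for j by (rule Ecyl_convex) (rule cvx)
  define S where "S j \<delta> = cball 0 R \<inter> {x. (\<exists>z\<in>Ecyl blk D j. dist x z \<le> \<delta>) \<and> \<not> cball x \<delta> \<subseteq> Ecyl blk D j}" for j \<delta>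
  have "\<forall>j. \<exists>\<delta>0 K. \<delta>0 > 0 \<and> (\<forall>\<delta>. 0 \<le> \<delta> \<and> \<delta> \<le> \<delta>0 \<longrightarrow> emeasure lebesgue (S j \<delta>) \<le> ennreal (K * \<delta>))"
    using shell_gen[OF Ecv Ecl, of R] unfolding S_def by blast
  then obtain df Kf where dK: "\<And>j. df j > 0"
    "\<And>j \<delta>. 0 \<le> \<delta> \<Longrightarrow> \<delta> \<le> df j \<Longrightarrow> emeasure lebesgue (S j \<delta>) \<le> ennreal (Kf j * \<delta>)"
    by metis
  define \<delta>0 where "\<delta>0 = Min (range df)"
  have d0: "\<delta>0 > 0" unfolding \<delta>0_def using dK(1) by (subst Min_gr_iff) auto
  have d0le: "\<delta>0 \<le> df j" for j unfolding \<delta>0_def by (rule Min_le) auto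
  define K where "K = (\<Sum>j\<in>UNIV. \<bar>Kf j\<bar>)"
  show ?thesis
  proof (rule exI[of _ \<delta>0], intro conjI d0 exI[of _ K] allI impI)
    show "K \<ge> 0" unfolding K_def by (simp add: sum_nonneg)
    fix \<delta> :: real assume d: "0 \<le> \<delta> \<and> \<delta> \<le> \<delta>0"
    have Sm: "S j \<delta> \<in> sets lebesgue" for j using shell_set_borel[OF Ecl] d by (simp add: S_def)
    have Um: "(\<Union>j\<in>UNIV. S j \<delta>) \<in> sets lebesgue" using Sm by (intro sets.countable_UN') auto
    have "Tset blk D \<epsilon> \<delta> \<subseteq> (\<Union>j\<in>UNIV. S j \<delta>)" using R unfolding Tset_def S_def by auto
    then have "emeasure lebesgue (Tset blk D \<epsilon> \<delta>) \<le> emeasure lebesgue (\<Union>j\<in>UNIV. S j \<delta>)"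
      by (rule emeasure_mono) (rule Um)
    also have "\<dots> \<le> (\<Sum>j\<in>UNIV. emeasure lebesgue (S j \<delta>))"
      by (rule emeasure_subadditive_finite) (use Sm in auto)
    also have "\<dots> \<le> (\<Sum>j\<in>UNIV. ennreal (\<bar>Kf j\<bar> * \<delta>))"
    proof (rule sum_mono)
      fix j
      have "emeasure lebesgue (S j \<delta>) \<le> ennreal (Kf j * \<delta>)" using dK(2)[of \<delta> j] d d0le[of j] by auto
      also have "\<dots> \<le> ennreal (\<bar>Kf j\<bar> * \<delta>)" using d by (intro ennreal_leI mult_right_mono) auto
      finally show "emeasure lebesgue (S j \<delta>) \<le> ennreal (\<bar>Kf j\<bar> * \<delta>)" .
    qed
    also have "\<dots> = ennreal (K * \<delta>)" using d by (simp add: K_def sum_distrib_right)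
    finally show "emeasure lebesgue (Tset blk D \<epsilon> \<delta>) \<le> ennreal (K * \<delta>)" .
  qed
qed

lemma density_bound:
  fixes p :: "'a::euclidean_space \<Rightarrow> real"
  assumes pm: "(\<lambda>x. ennreal (p x)) \<in> borel_measurable lborel" and T: "T \<in> sets borel" and TS: "T \<subseteq> S"
    and B: "\<forall>x\<in>S. \<bar>p x\<bar> \<le> B"
  shows "emeasure (density lborel (\<lambda>x. ennreal (p x))) T \<le> ennreal B * emeasure lebesgue T"
proof -
  have "emeasure (density lborel (\<lambda>x. ennreal (p x))) T = (\<integral>\<^sup>+ x. ennreal (p x) * indicator T x \<partial>lborel)"
    using T by (intro emeasure_density pm) auto
  also have "\<dots> \<le> (\<integral>\<^sup>+ x. ennreal B * indicator T x \<partial>lborel)"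
  proof (rule nn_integral_mono)
    fix x show "ennreal (p x) * indicator T x \<le> ennreal B * indicator T x"
      using B TS by (cases "x \<in> T") (auto intro!: ennreal_leI simp: abs_le_iff)
  qed
  also have "\<dots> = ennreal B * emeasure lborel T" using T by (intro nn_integral_cmult_indicator) auto
  also have "emeasure lborel T = emeasure lebesgue T" using T by simp
  finally show ?thesis .
qed

theorem lemmaS3:
  fixes M :: "'a measure"
    and blk :: "'n::finite \<Rightarrow> 'd::finite"
    and D :: "'d \<Rightarrow> (real^'n) set"
    and p :: "real^'n \<Rightarrow> real"
    and \<epsilon> :: real
    and xi :: "nat \<Rightarrow> 'a \<Rightarrow> real^'n"
    and xt :: "nat \<Rightarrow> nat \<Rightarrow> 'a \<Rightarrow> real^'n"
    and a :: "nat \<Rightarrow> 'd \<Rightarrow> real"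
  assumes "prob_space M"
    and D_sub: "\<And>j. D j \<subseteq> block_subspace blk j"
    and D_compact: "\<And>j. compact (D j)"
    and D_convex: "\<And>j. convex (D j)"
    and eps: "\<epsilon> > 0"
    and p_bounded: "\<exists>B. \<forall>x\<in>enlarged blk D \<epsilon>. \<bar>p x\<bar> \<le> B"
    and xi_dist: "\<And>i. distributed M lborel (xi i) (\<lambda>x. ennreal (p x))"
    and xi_indep: "prob_space.indep_vars M (\<lambda>_. borel) xi UNIV"
    and xt_meas: "\<And>n i. xt n i \<in> borel_measurable M"
    and a_nonneg: "\<And>n j. a n j \<ge> 0"
    and a_small: "\<And>j. (\<lambda>n. a n j) \<longlonglongrightarrow> 0"
    and xt_close: "\<And>j. Op M (\<lambda>n \<omega>. Max (insert 0
              ((\<lambda>i. norm (bproj blk j (xt n i \<omega>) - bproj blk j (xi i \<omega>))) ` {..<n})))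
            (\<lambda>n. a n j)"
  shows "Op M (\<lambda>n \<omega>. \<bar>(\<Sum>i<n. indicator (prod_blocks blk D) (xt n i \<omega>)) / real n
                     - (\<Sum>i<n. indicator (prod_blocks blk D) (xi i \<omega>)) / real n\<bar>)
           (\<lambda>n. (\<Sum>j\<in>UNIV. a n j) + sqrt (\<Sum>j\<in>UNIV. a n j) / sqrt (real n))
       \<and> Op M (\<lambda>n \<omega>. \<bar>(\<Sum>i<n. indicator (prod_blocks blk D) (xt n i \<omega>)) / real n
                     - measure (density lborel (\<lambda>x. ennreal (p x))) (prod_blocks blk D)\<bar>)
           (\<lambda>n. (\<Sum>j\<in>UNIV. a n j) + 1 / sqrt (real n))"
proof -
  interpret prob_space M by fact
  define Dp where "Dp = prod_blocks blk D"
  define PD where "PD = density lborel (\<lambda>x. ennreal (p x))"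
  have cl: "closed (D j)" for j using D_compact[of j] by (rule compact_imp_closed)
  have Dpb[measurable]: "Dp \<in> sets borel" unfolding Dp_def
    by (rule borel_closed, rule prod_blocks_closed) (rule cl)
  have xim[measurable]: "xi i \<in> borel_measurable M" for i
    using distributed_measurable[OF xi_dist[of i]] by simp
  note xtm[measurable] = xt_meas
  have distr: "distr M lborel (xi i) = PD" for i
    using distributed_distr_eq_density[OF xi_dist[of i]] by (simp add: PD_def)
  have pm: "(\<lambda>x. ennreal (p x)) \<in> borel_measurable lborel"
    using distributed_borel_measurable[OF xi_dist[of 0]] .
  have probxi: "prob {\<omega>\<in>space M. xi i \<omega> \<in> A} = measure PD A" if "A \<in> sets borel" for i A
  proof -
    have "measure PD A = measure (distr M lborel (xi i)) A" by (simp add: distr)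
    also have "\<dots> = measure M (xi i -` A \<inter> space M)" using that by (intro measure_distr) auto
    also have "xi i -` A \<inter> space M = {\<omega>\<in>space M. xi i \<omega> \<in> A}" by auto
    finally show ?thesis by simp
  qed
  have ind: "indep_vars (\<lambda>_. borel) xi UNIV" using xi_indep .
  obtain B0 where B0: "\<forall>x\<in>enlarged blk D \<epsilon>. \<bar>p x\<bar> \<le> B0" using p_bounded by blast
  define B where "B = max B0 0"
  have B: "\<forall>x\<in>enlarged blk D \<epsilon>. \<bar>p x\<bar> \<le> B" "B \<ge> 0" using B0 by (auto simp: B_def intro: order_trans)
  obtain \<delta>0 K where d0: "\<delta>0 > 0" "K \<ge> 0"
    and TK: "\<And>\<delta>. 0 \<le> \<delta> \<Longrightarrow> \<delta> \<le> \<delta>0 \<Longrightarrow> emeasure lebesgue (Tset blk D \<epsilon> \<delta>) \<le> ennreal (K * \<delta>)"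
    using Tset_measure[of D \<epsilon> blk] D_compact D_convex eps by (metis less_imp_le)
  define K1 where "K1 = max 1 (B * K)"
  define \<delta>1 where "\<delta>1 = min \<delta>0 \<epsilon>"
  have K1: "K1 \<ge> 1" by (simp add: K1_def)
  have d1: "\<delta>1 > 0" "\<delta>1 \<le> \<epsilon>" "\<delta>1 \<le> \<delta>0" using d0 eps by (auto simp: \<delta>1_def)
  have Tb[measurable]: "Tset blk D \<epsilon> \<delta> \<in> sets borel" if "0 \<le> \<delta>" for \<delta>
    by (rule Tset_borel) (use cl eps that in auto)
  have qb: "measure PD (Tset blk D \<epsilon> \<delta>) \<le> K1 * \<delta>" if "0 \<le> \<delta>" "\<delta> \<le> \<delta>1" for \<delta>
  proof -
    have PDp: "prob_space PD" unfolding distr[of 0, symmetric] by (rule prob_space_distr) simp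
    have "emeasure PD (Tset blk D \<epsilon> \<delta>) \<le> ennreal B * emeasure lebesgue (Tset blk D \<epsilon> \<delta>)"
      unfolding PD_def by (rule density_bound[OF pm Tb[OF that(1)] _ B(1)]) (simp add: Tset_def)
    also have "\<dots> \<le> ennreal B * ennreal (K * \<delta>)" using TK[of \<delta>] that d1 by (intro mult_left_mono) auto
    also have "\<dots> = ennreal (B * K * \<delta>)" using B(2) d0 that by (simp add: ennreal_mult' mult.assoc)
    finally have "measure PD (Tset blk D \<epsilon> \<delta>) \<le> B * K * \<delta>"
      unfolding measure_def using B(2) d0 that by (intro enn2real_leI) auto
    also have "\<dots> \<le> K1 * \<delta>" using that by (intro mult_right_mono) (auto simp: K1_def)
    finally show ?thesis .
  qed
  have T0: "Tset blk D \<epsilon> 0 = {}" by (auto simp: Tset_def)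
  define r1 where "r1 n = (\<Sum>j\<in>UNIV. a n j) + sqrt (\<Sum>j\<in>UNIV. a n j) / sqrt (real n)" for n
  define X where "X n \<omega> = \<bar>(\<Sum>i<n. indicator Dp (xt n i \<omega>)) / real n - (\<Sum>i<n. indicator Dp (xi i \<omega>)) / real n\<bar>" for n \<omega>
  define Mx where "Mx j n \<omega> = Max (insert 0 ((\<lambda>i. norm (bproj blk j (xt n i \<omega>) - bproj blk j (xi i \<omega>))) ` {..<n}))" for j n \<omega>
  have Xm[measurable]: "X n \<in> borel_measurable M" for n unfolding X_def by measurable
  have op1: "Op M X r1"
    unfolding Op_def
  proof (intro allI impI)
    fix \<eta> :: real assume \<eta>: "\<eta> > 0"
    define cd where "cd = real CARD('d)"
    have cd: "cd > 0" by (simp add: cd_def)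
    have pos: "\<eta> / (2 * cd) > 0" using \<eta> cd by simp
    have "\<exists>C N. \<forall>n\<ge>N. measure M {\<omega> \<in> space M. \<bar>Mx j n \<omega>\<bar> > C * a n j} < \<eta> / (2 * cd)" for j
      using xt_close[of j, unfolded Op_def, rule_format, OF pos] unfolding Mx_def .
    then have "\<forall>j. \<exists>C N. \<forall>n\<ge>N. measure M {\<omega> \<in> space M. \<bar>Mx j n \<omega>\<bar> > C * a n j} < \<eta> / (2 * cd)" by blast
    then obtain Cf Nf where CN: "\<And>j n. n \<ge> Nf j \<Longrightarrow> measure M {\<omega> \<in> space M. \<bar>Mx j n \<omega>\<bar> > Cf j * a n j} < \<eta> / (2 * cd)"
      by metis
    define C where "C = 1 + (\<Sum>j\<in>UNIV. \<bar>Cf j\<bar>)"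
    have C: "C \<ge> 1" "\<And>j. \<bar>Cf j\<bar> \<le> C"
    proof -
      show "C \<ge> 1" unfolding C_def by (simp add: sum_nonneg)
      fix j have "\<bar>Cf j\<bar> \<le> (\<Sum>j\<in>UNIV. \<bar>Cf j\<bar>)" by (rule member_le_sum) auto
      then show "\<bar>Cf j\<bar> \<le> C" unfolding C_def by simp
    qed
    have "(\<lambda>n. C * (\<Sum>j\<in>UNIV. a n j)) \<longlonglongrightarrow> C * 0"
      by (intro tendsto_mult tendsto_const) (use tendsto_sum[of UNIV "\<lambda>j n. a n j" "\<lambda>_. 0"] a_small in simp)
    then have "eventually (\<lambda>n. C * (\<Sum>j\<in>UNIV. a n j) < \<delta>1) sequentially"
      using d1 by (intro order_tendstoD(2)) auto
    then obtain N2 where N2: "\<And>n. n \<ge> N2 \<Longrightarrow> C * (\<Sum>j\<in>UNIV. a n j) < \<delta>1" by (auto simp: eventually_sequentially)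
    define lam where "lam = sqrt (2 / \<eta>)"
    have lam: "lam > 0" "lam^2 = 2 / \<eta>" using \<eta> by (auto simp: lam_def)
    define C' where "C' = K1 * C + lam * sqrt (K1 * C)"
    define N where "N = max (Max (range Nf)) (max N2 1)"
    show "\<exists>C N. \<forall>n\<ge>N. measure M {\<omega> \<in> space M. \<bar>X n \<omega>\<bar> > C * r1 n} < \<eta>"
    proof (intro exI[of _ C'] exI[of _ N] allI impI)
      fix n assume n: "n \<ge> N"
      have nN: "n \<ge> Nf j" for j
      proof -
        have "Nf j \<le> Max (range Nf)" by (rule Max_ge) auto
        then show ?thesis using n unfolding N_def by linarith
      qed
      have n2: "n \<ge> N2" "n \<ge> 1" using n unfolding N_def by auto
      define \<sigma> where "\<sigma> = (\<Sum>j\<in>UNIV. a n j)"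
      have \<sigma>0: "\<sigma> \<ge> 0" unfolding \<sigma>_def by (simp add: sum_nonneg a_nonneg)
      have anj: "a n j \<le> \<sigma>" for j unfolding \<sigma>_def by (rule member_le_sum) (auto simp: a_nonneg)
      define \<delta> where "\<delta> = C * \<sigma>"
      have \<delta>: "0 \<le> \<delta>" "\<delta> \<le> \<delta>1" using C \<sigma>0 N2[OF n2(1)] by (auto simp: \<delta>_def \<sigma>_def)
      define T where "T = Tset blk D \<epsilon> \<delta>"
      have Tm[measurable]: "T \<in> sets borel" unfolding T_def using \<delta> by simp
      define G where "G = (\<Union>j\<in>UNIV. {\<omega> \<in> space M. \<bar>Mx j n \<omega>\<bar> > Cf j * a n j})"
      have Gj: "{\<omega> \<in> space M. \<bar>Mx j n \<omega>\<bar> > Cf j * a n j} \<in> events" for j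
      proof -
        have "{\<omega> \<in> space M. \<bar>Mx j n \<omega>\<bar> > Cf j * a n j} = {\<omega> \<in> space M. Cf j * a n j < 0 \<or>
            (\<exists>i<n. Cf j * a n j < norm (bproj blk j (xt n i \<omega>) - bproj blk j (xi i \<omega>)))}"
        proof -
          have "\<bar>Mx j n \<omega>\<bar> = Mx j n \<omega>" for \<omega> unfolding Mx_def by (intro abs_of_nonneg) (auto intro: Max_ge)
          moreover have "(c < Mx j n \<omega>) \<longleftrightarrow> (c < 0 \<or> (\<exists>i<n. c < norm (bproj blk j (xt n i \<omega>) - bproj blk j (xi i \<omega>))))" for c \<omega>
            unfolding Mx_def by (subst Max_gr_iff) auto
          ultimately show ?thesis by auto
        qed
        also have "\<dots> \<in> events" by measurable
        finally show ?thesis .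
      qed
      have Gm: "G \<in> events" unfolding G_def using Gj by auto
      have PG: "prob G < \<eta> / 2"
      proof -
        have "prob G \<le> (\<Sum>j\<in>UNIV. prob {\<omega> \<in> space M. \<bar>Mx j n \<omega>\<bar> > Cf j * a n j})"
          unfolding G_def by (rule finite_measure_subadditive_finite) (use Gj in auto)
        also have "\<dots> < (\<Sum>j\<in>(UNIV::'d set). \<eta> / (2 * cd))"
          by (rule sum_strict_mono) (use CN nN in auto)
        also have "\<dots> = \<eta> / 2" using cd by (simp add: cd_def)
        finally show ?thesis .
      qed
      define Y where "Y \<omega> = (\<Sum>i<n. indicator T (xi i \<omega>)) / real n" for \<omega>
      have XY: "X n \<omega> \<le> Y \<omega>" if "\<omega> \<in> space M" "\<omega> \<notin> G" for \<omega>
      proof -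
        have close: "norm (bproj blk j (xt n i \<omega>) - bproj blk j (xi i \<omega>)) \<le> \<delta>" if i: "i < n" for i j
        proof -
          have "norm (bproj blk j (xt n i \<omega>) - bproj blk j (xi i \<omega>)) \<le> Mx j n \<omega>"
            unfolding Mx_def using i by (intro Max_ge) auto
          also have "\<dots> \<le> \<bar>Mx j n \<omega>\<bar>" by simp
          also have "\<dots> \<le> Cf j * a n j"
          proof -
            have "\<omega> \<notin> {\<omega> \<in> space M. \<bar>Mx j n \<omega>\<bar> > Cf j * a n j}" using \<open>\<omega> \<notin> G\<close> unfolding G_def by blast
            then show ?thesis using \<open>\<omega> \<in> space M\<close> by simp
          qed
          also have "\<dots> \<le> \<bar>Cf j\<bar> * a n j" using a_nonneg[of n j] by (intro mult_right_mono) auto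
          also have "\<dots> \<le> C * a n j" using a_nonneg[of n j] C(2)[of j] by (intro mult_right_mono) auto
          also have "\<dots> \<le> C * \<sigma>" using anj[of j] C(1) by (intro mult_left_mono) auto
          finally show ?thesis by (simp add: \<delta>_def)
        qed
        have "X n \<omega> = \<bar>\<Sum>i<n. indicator Dp (xt n i \<omega>) - indicator Dp (xi i \<omega>)\<bar> / real n"
          unfolding X_def by (simp add: diff_divide_distrib[symmetric] sum_subtractf)
        also have "\<dots> \<le> (\<Sum>i<n. \<bar>indicator Dp (xt n i \<omega>) - indicator Dp (xi i \<omega>)\<bar>) / real n"
          by (intro divide_right_mono sum_abs) auto
        also have "\<dots> \<le> (\<Sum>i<n. indicator T (xi i \<omega>)) / real n"
          unfolding Dp_def T_def
          by (intro divide_right_mono sum_mono key_pointwise) (use \<delta> d1 close in auto)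
        finally show ?thesis unfolding Y_def .
      qed
      have r1n: "r1 n = \<sigma> + sqrt \<sigma> / sqrt (real n)" unfolding r1_def \<sigma>_def ..
      have X0: "X n \<omega> \<ge> 0" for \<omega> unfolding X_def by simp
      show "measure M {\<omega> \<in> space M. \<bar>X n \<omega>\<bar> > C' * r1 n} < \<eta>"
      proof (cases "\<sigma> = 0")
        case True
        then have "T = {}" using T0 by (simp add: T_def \<delta>_def)
        have "{\<omega> \<in> space M. \<bar>X n \<omega>\<bar> > C' * r1 n} \<subseteq> G"
        proof (rule subsetI, rule ccontr)
          fix \<omega> assume w: "\<omega> \<in> {\<omega> \<in> space M. \<bar>X n \<omega>\<bar> > C' * r1 n}" and nG: "\<omega> \<notin> G"
          have "r1 n = 0" using True r1n by simp
          then have "X n \<omega> > 0" using w X0[of \<omega>] by simp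
          moreover have "Y \<omega> = 0" unfolding Y_def using \<open>T = {}\<close> by simp
          ultimately show False using XY[of \<omega>] w nG by simp
        qed
        then have "measure M {\<omega> \<in> space M. \<bar>X n \<omega>\<bar> > C' * r1 n} \<le> prob G"
          using Gm by (intro finite_measure_mono) auto
        also have "\<dots> < \<eta>" using PG \<eta> by simp
        finally show ?thesis .
      next
        case False
        then have \<sigma>p: "\<sigma> > 0" using \<sigma>0 by simp
        define q where "q = measure PD T"
        have q: "q \<le> K1 * C * \<sigma>" using qb[OF \<delta>] by (simp add: q_def T_def \<delta>_def mult.assoc)
        define s where "s = lam * sqrt (K1 * C * \<sigma> / real n)"
        have s: "s > 0" using lam \<sigma>p K1 C n2 by (auto simp: s_def)
        define H where "H = {\<omega>\<in>space M. s \<le> \<bar>(\<Sum>i<n. indicator T (xi i \<omega>)) / real n - q\<bar>}"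
        have Hm: "H \<in> events" unfolding H_def by measurable
        have PH: "prob H \<le> \<eta> / 2"
        proof -
          have "prob H \<le> q / (real n * s^2)"
            unfolding H_def by (rule bin_cheb[OF ind Tm _ _ s]) (use probxi Tm n2 in \<open>auto simp: q_def\<close>)
          also have "\<dots> \<le> (K1 * C * \<sigma>) / (real n * s^2)"
            using q s n2 by (intro divide_right_mono) auto
          also have "real n * s^2 = lam^2 * (K1 * C * \<sigma>)"
            using n2 \<sigma>p K1 C by (simp add: s_def power_mult_distrib)
          also have "(K1 * C * \<sigma>) / (lam^2 * (K1 * C * \<sigma>)) = \<eta> / 2"
            using lam \<sigma>p K1 C \<eta> by (simp add: field_simps)
          finally show ?thesis .
        qed
        have "{\<omega> \<in> space M. \<bar>X n \<omega>\<bar> > C' * r1 n} \<subseteq> G \<union> H"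
        proof (rule subsetI, rule ccontr)
          fix \<omega> assume w: "\<omega> \<in> {\<omega> \<in> space M. \<bar>X n \<omega>\<bar> > C' * r1 n}" and nGH: "\<omega> \<notin> G \<union> H"
          have "X n \<omega> \<le> Y \<omega>" using XY w nGH by auto
          also have "Y \<omega> < q + s" using nGH w unfolding H_def Y_def by auto
          also have "q + s \<le> K1 * C * \<sigma> + lam * sqrt (K1 * C) * (sqrt \<sigma> / sqrt (real n))"
            using q by (simp add: s_def real_sqrt_mult real_sqrt_divide mult.assoc)
          also have "\<dots> \<le> C' * \<sigma> + C' * (sqrt \<sigma> / sqrt (real n))"
          proof (intro add_mono mult_right_mono)
            show "K1 * C \<le> C'" using lam K1 C by (simp add: C'_def)
            show "lam * sqrt (K1 * C) \<le> C'" using lam K1 C by (simp add: C'_def)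
          qed (use \<sigma>0 in auto)
          also have "\<dots> = C' * r1 n" by (simp add: r1n distrib_left)
          finally show False using w X0[of \<omega>] by simp
        qed
        then have "measure M {\<omega> \<in> space M. \<bar>X n \<omega>\<bar> > C' * r1 n} \<le> prob (G \<union> H)"
          using Gm Hm by (intro finite_measure_mono) auto
        also have "\<dots> \<le> prob G + prob H" using Gm Hm by (rule measure_Un_le)
        also have "\<dots> < \<eta>" using PG PH by simp
        finally show ?thesis .
      qed
    qed
  qed
  have sq: "sqrt \<sigma> / sqrt (real n) \<le> \<sigma> + 1 / sqrt (real n)" if "\<sigma> \<ge> 0" "n \<ge> 1" for \<sigma> :: real and n :: nat
  proof (cases "\<sigma> \<le> 1")
    case True
    have "sqrt \<sigma> \<le> 1" using True by simp
    then have "sqrt \<sigma> / sqrt (real n) \<le> 1 / sqrt (real n)" using that by (intro divide_right_mono) auto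
    then show ?thesis using that by simp
  next
    case False
    have s1: "1 \<le> sqrt \<sigma>" using False by simp
    have "sqrt \<sigma> * 1 \<le> sqrt \<sigma> * sqrt \<sigma>" using s1 by (intro mult_left_mono) auto
    then have ss: "sqrt \<sigma> \<le> \<sigma>" using that(1) by simp
    have n1: "sqrt (real n) \<ge> 1" using that by simp
    have "sqrt \<sigma> / sqrt (real n) \<le> sqrt \<sigma> / 1" using n1 that by (intro divide_left_mono) auto
    moreover have "1 / sqrt (real n) \<ge> 0" by simp
    ultimately show ?thesis using ss by linarith
  qed
  define p0 where "p0 = measure PD Dp"
  have p0: "0 \<le> p0" "p0 \<le> 1"
  proof -
    have "p0 = prob {\<omega>\<in>space M. xi 0 \<omega> \<in> Dp}" using probxi[OF Dpb, of 0] by (simp add: p0_def)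
    then show "0 \<le> p0" "p0 \<le> 1" by auto
  qed
  define r2 where "r2 n = (\<Sum>j\<in>UNIV. a n j) + 1 / sqrt (real n)" for n
  define Z where "Z n \<omega> = \<bar>(\<Sum>i<n. indicator Dp (xt n i \<omega>)) / real n - p0\<bar>" for n \<omega>
  have op2: "Op M Z r2"
    unfolding Op_def
  proof (intro allI impI)
    fix \<eta> :: real assume \<eta>: "\<eta> > 0"
    obtain C1 N1 where CN1: "\<And>n. n \<ge> N1 \<Longrightarrow> measure M {\<omega> \<in> space M. \<bar>X n \<omega>\<bar> > C1 * r1 n} < \<eta> / 2"
      using op1[unfolded Op_def, rule_format, of "\<eta>/2"] \<eta> by auto
    define C1' where "C1' = max C1 0"
    define lam where "lam = sqrt (4 / \<eta>)"
    have lam: "lam > 0" "lam^2 = 4 / \<eta>" using \<eta> by (auto simp: lam_def)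
    define C'' where "C'' = 2 * C1' + lam"
    show "\<exists>C N. \<forall>n\<ge>N. measure M {\<omega> \<in> space M. \<bar>Z n \<omega>\<bar> > C * r2 n} < \<eta>"
    proof (intro exI[of _ C''] exI[of _ "max N1 1"] allI impI)
      fix n assume n: "n \<ge> max N1 1"
      then have n1: "n \<ge> N1" "n \<ge> 1" by auto
      define \<sigma> where "\<sigma> = (\<Sum>j\<in>UNIV. a n j)"
      have \<sigma>0: "\<sigma> \<ge> 0" unfolding \<sigma>_def by (simp add: sum_nonneg a_nonneg)
      have r1n: "r1 n = \<sigma> + sqrt \<sigma> / sqrt (real n)" unfolding r1_def \<sigma>_def ..
      have r2n: "r2 n = \<sigma> + 1 / sqrt (real n)" unfolding r2_def \<sigma>_def ..
      have r1p: "r1 n \<ge> 0" using \<sigma>0 r1n by simp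
      define G where "G = {\<omega> \<in> space M. \<bar>X n \<omega>\<bar> > C1 * r1 n}"
      have Gm: "G \<in> events" unfolding G_def by measurable
      have PG: "prob G < \<eta> / 2" unfolding G_def using CN1[OF n1(1)] .
      define s where "s = lam / sqrt (real n)"
      have s: "s > 0" using lam n1 by (simp add: s_def)
      define H where "H = {\<omega>\<in>space M. s \<le> \<bar>(\<Sum>i<n. indicator Dp (xi i \<omega>)) / real n - p0\<bar>}"
      have Hm: "H \<in> events" unfolding H_def by measurable
      have PH: "prob H < \<eta> / 2"
      proof -
        have "prob H \<le> p0 / (real n * s^2)"
          unfolding H_def by (rule bin_cheb[OF ind Dpb _ _ s]) (use probxi Dpb n1 in \<open>auto simp: p0_def\<close>)
        also have "real n * s^2 = lam^2" using n1 by (simp add: s_def power_divide)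
        also have "p0 / lam^2 \<le> 1 / lam^2" using p0 lam \<eta> by (intro divide_right_mono) auto
        also have "1 / lam^2 = \<eta> / 4" using lam by simp
        also have "\<dots> < \<eta> / 2" using \<eta> by simp
        finally show ?thesis .
      qed
      have "{\<omega> \<in> space M. \<bar>Z n \<omega>\<bar> > C'' * r2 n} \<subseteq> G \<union> H"
      proof (rule subsetI, rule ccontr)
        fix \<omega> assume w: "\<omega> \<in> {\<omega> \<in> space M. \<bar>Z n \<omega>\<bar> > C'' * r2 n}" and nGH: "\<omega> \<notin> G \<union> H"
        have x1: "X n \<omega> \<le> C1' * r1 n"
        proof -
          have "\<bar>X n \<omega>\<bar> \<le> C1 * r1 n" using nGH w unfolding G_def by auto
          also have "\<dots> \<le> C1' * r1 n" using r1p by (intro mult_right_mono) (auto simp: C1'_def)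
          finally show ?thesis by simp
        qed
        have x2: "\<bar>(\<Sum>i<n. indicator Dp (xi i \<omega>)) / real n - p0\<bar> < s" using nGH w unfolding H_def by auto
        have "Z n \<omega> \<le> X n \<omega> + \<bar>(\<Sum>i<n. indicator Dp (xi i \<omega>)) / real n - p0\<bar>"
          unfolding Z_def X_def by (rule order_trans[OF _ abs_triangle_ineq]) simp
        also have "\<dots> < C1' * r1 n + s" using x1 x2 by simp
        also have "C1' * r1 n \<le> C1' * (2 * \<sigma> + 1 / sqrt (real n))"
          using sq[OF \<sigma>0 n1(2)] r1n by (intro mult_left_mono) (auto simp: C1'_def)
        also have "C1' * (2 * \<sigma> + 1 / sqrt (real n)) + s \<le> C'' * r2 n"
        proof -
          have "C1' \<ge> 0" by (simp add: C1'_def)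
          have i1: "2 * C1' * \<sigma> \<le> C'' * \<sigma>" using \<sigma>0 lam \<open>C1' \<ge> 0\<close> by (intro mult_right_mono) (auto simp: C''_def)
          have i2: "(C1' + lam) * (1 / sqrt (real n)) \<le> C'' * (1 / sqrt (real n))"
            using lam \<open>C1' \<ge> 0\<close> by (intro mult_right_mono) (auto simp: C''_def)
          show ?thesis using i1 i2 unfolding r2n s_def by (simp add: algebra_simps add_divide_distrib)
        qed
        finally show False using w by (simp add: Z_def)
      qed
      then have "measure M {\<omega> \<in> space M. \<bar>Z n \<omega>\<bar> > C'' * r2 n} \<le> prob (G \<union> H)"
        using Gm Hm by (intro finite_measure_mono) auto
      also have "\<dots> \<le> prob G + prob H" using Gm Hm by (rule measure_Un_le)
      also have "\<dots> < \<eta>" using PG PH by simp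
      finally show "measure M {\<omega> \<in> space M. \<bar>Z n \<omega>\<bar> > C'' * r2 n} < \<eta>" .
    qed
  qed
  have e1: "X = (\<lambda>n \<omega>. \<bar>(\<Sum>i<n. indicator (prod_blocks blk D) (xt n i \<omega>)) / real n
                     - (\<Sum>i<n. indicator (prod_blocks blk D) (xi i \<omega>)) / real n\<bar>)"
    by (simp add: X_def Dp_def fun_eq_iff)
  have e2: "Z = (\<lambda>n \<omega>. \<bar>(\<Sum>i<n. indicator (prod_blocks blk D) (xt n i \<omega>)) / real n
                     - measure (density lborel (\<lambda>x. ennreal (p x))) (prod_blocks blk D)\<bar>)"
    by (simp add: Z_def Dp_def p0_def PD_def fun_eq_iff)
  have e3: "r1 = (\<lambda>n. (\<Sum>j\<in>UNIV. a n j) + sqrt (\<Sum>j\<in>UNIV. a n j) / sqrt (real n))"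
    by (simp add: r1_def fun_eq_iff)
  have e4: "r2 = (\<lambda>n. (\<Sum>j\<in>UNIV. a n j) + 1 / sqrt (real n))"
    by (simp add: r2_def fun_eq_iff)
  show ?thesis using op1 op2 unfolding e1 e2 e3 e4 by simp
qed

end
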